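(* Let $G$ be a long graph. Then $i(G)=\gamma(G)$.
   Context: All graphs are finite and simple. A graph $G$ is long if the set $\{x\in V(G):\deg(x)>2\}$ is independent. A set $A\subseteq V(G)$ is dominating if every vertex not in $A$ has a neighbor in $A$; $\gamma(G)$ is the minimum size of a dominating set and $i(G)$ the minimum size of an independent dominating set. *)

theory Defs
  imports Main
begin

definition simple_graph :: "'a set \<Rightarrow> ('a \<Rightarrow> 'a \<Rightarrow> bool) \<Rightarrow> bool" where
  "simple_graph V E \<longleftrightarrow> finite V \<and> (\<forall>x y. E x y \<longrightarrow> x \<in> V \<and> y \<in> V)
     \<and> (\<forall>x. \<not> E x x) \<and> (\<forall>x y. E x y \<longrightarrow> E y x)"

definition neighbors :: "'a set \<Rightarrow> ('a \<Rightarrow> 'a \<Rightarrow> bool) \<Rightarrow> 'a \<Rightarrow> 'a set" where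
  "neighbors V E x = {y \<in> V. E x y}"

definition degree :: "'a set \<Rightarrow> ('a \<Rightarrow> 'a \<Rightarrow> bool) \<Rightarrow> 'a \<Rightarrow> nat" where
  "degree V E x = card (neighbors V E x)"

definition independent :: "'a set \<Rightarrow> ('a \<Rightarrow> 'a \<Rightarrow> bool) \<Rightarrow> 'a set \<Rightarrow> bool" where
  "independent V E A \<longleftrightarrow> A \<subseteq> V \<and> (\<forall>x\<in>A. \<forall>y\<in>A. \<not> E x y)"

definition long_graph :: "'a set \<Rightarrow> ('a \<Rightarrow> 'a \<Rightarrow> bool) \<Rightarrow> bool" where
  "long_graph V E \<longleftrightarrow> independent V E {x \<in> V. degree V E x > 2}"

definition dominating :: "'a set \<Rightarrow> ('a \<Rightarrow> 'a \<Rightarrow> bool) \<Rightarrow> 'a set \<Rightarrow> bool" where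
  "dominating V E A \<longleftrightarrow> A \<subseteq> V \<and> (\<forall>x\<in>V - A. \<exists>y\<in>A. E x y)"

definition domination_number :: "'a set \<Rightarrow> ('a \<Rightarrow> 'a \<Rightarrow> bool) \<Rightarrow> nat" where
  "domination_number V E = (LEAST k. \<exists>A. dominating V E A \<and> card A = k)"

definition independent_domination_number :: "'a set \<Rightarrow> ('a \<Rightarrow> 'a \<Rightarrow> bool) \<Rightarrow> nat" where
  "independent_domination_number V E =
     (LEAST k. \<exists>A. dominating V E A \<and> independent V E A \<and> card A = k)"

end

theory Submission
  imports Defs
begin

definition adjd :: "('a \<Rightarrow> 'a \<Rightarrow> bool) \<Rightarrow> 'a set \<Rightarrow> 'a set" where
  "adjd E D = {v\<in>D. \<exists>w\<in>D. E v w}"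

lemma swap_step:
  assumes G: "simple_graph V E"
    and D: "dominating V E D"
    and mn: "\<And>B. dominating V E B \<Longrightarrow> card D \<le> card B"
    and xy: "x \<in> D" "y \<in> D" "E x y"
    and dx: "degree V E x \<le> 2"
  shows "\<exists>D'. dominating V E D' \<and> card D' = card D \<and> card (adjd E D') < card (adjd E D)"
proof -
  have fin: "finite V" and sym: "\<And>a b. E a b \<Longrightarrow> E b a" and irr: "\<And>a. \<not> E a a"
    and inV: "\<And>a b. E a b \<Longrightarrow> a \<in> V \<and> b \<in> V"
    using G unfolding simple_graph_def by auto
  have DV: "D \<subseteq> V" using D unfolding dominating_def by auto
  have finD: "finite D" using DV fin finite_subset by blast
  have "card (D - {x}) < card D" by (rule card_Diff1_less[OF finD xy(1)])
  hence "\<not> dominating V E (D - {x})" using mn by fastforce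
  moreover have "D - {x} \<subseteq> V" using DV by auto
  ultimately obtain z where z: "z \<in> V" "z \<notin> D - {x}" "\<And>u. u \<in> D - {x} \<Longrightarrow> \<not> E z u"
    unfolding dominating_def by auto
  have yx: "y \<noteq> x" using xy irr by auto
  have zx: "z \<noteq> x" using z(3)[of y] xy yx sym by auto
  hence znD: "z \<notin> D" using z(2) by auto
  obtain u where u: "u \<in> D" "E z u" using D z(1) znD unfolding dominating_def by auto
  have "u = x" using z(3)[of u] u by auto
  hence Ezx: "E z x" using u by simp
  have yz: "y \<noteq> z" using znD xy by auto
  have nbfin: "finite (neighbors V E x)" using fin unfolding neighbors_def by auto
  have yzn: "{y, z} \<subseteq> neighbors V E x" using xy Ezx sym inV unfolding neighbors_def by auto
  have "card {y, z} = 2" using yz by simp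
  hence nb: "neighbors V E x = {y, z}"
  proof -
    have "card {y, z} \<le> card (neighbors V E x)" using card_mono[OF nbfin yzn] .
    hence "card {y, z} = card (neighbors V E x)" using dx \<open>card {y, z} = 2\<close> unfolding degree_def by linarith
    thus ?thesis using card_subset_eq[OF nbfin yzn] by simp
  qed
  define D' where "D' = insert z (D - {x})"
  have dom: "dominating V E D'"
    unfolding dominating_def
  proof (intro conjI ballI)
    show "D' \<subseteq> V" using DV z(1) D'_def by auto
  next
    fix w assume w: "w \<in> V - D'"
    show "\<exists>y\<in>D'. E w y"
    proof (cases "w = x")
      case True thus ?thesis using Ezx sym D'_def by auto
    next
      case False
      hence "w \<notin> D" using w D'_def by auto
      then obtain u where u: "u \<in> D" "E w u" using D w unfolding dominating_def by auto
      show ?thesis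
      proof (cases "u = x")
        case True
        hence "w \<in> neighbors V E x" using u sym w unfolding neighbors_def by auto
        hence "w = y \<or> w = z" using nb by auto
        thus ?thesis using w xy yx D'_def by auto
      next
        case False thus ?thesis using u D'_def by auto
      qed
    qed
  qed
  have cardeq: "card D' = card D"
    unfolding D'_def using finD xy(1) znD
    by (simp add: card_gt_0_iff) (metis card_gt_0_iff Suc_pred empty_iff)
  have sub: "adjd E D' \<subseteq> adjd E D - {x}"
  proof
    fix v assume v: "v \<in> adjd E D'"
    then obtain w where vw: "v \<in> D'" "w \<in> D'" "E v w" unfolding adjd_def by auto
    have "v \<noteq> z"
    proof
      assume "v = z"
      hence "w \<noteq> z" using vw irr by auto
      hence "w \<in> D - {x}" using vw D'_def by auto
      thus False using z(3) vw \<open>v = z\<close> by auto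
    qed
    hence vD: "v \<in> D - {x}" using vw D'_def by auto
    have "w \<noteq> z" using z(3)[of v] vD vw sym by auto
    hence "w \<in> D" using vw D'_def by auto
    thus "v \<in> adjd E D - {x}" using vD vw unfolding adjd_def by auto
  qed
  have "x \<in> adjd E D" using xy unfolding adjd_def by auto
  moreover have "finite (adjd E D)" using finD unfolding adjd_def by auto
  ultimately have "card (adjd E D') < card (adjd E D)"
    using sub by (meson card_Diff1_less card_mono dual_order.strict_trans2 finite_Diff)
  thus ?thesis using dom cardeq by blast
qed

theorem theorem5p12:
  fixes V :: "'a set" and E :: "'a \<Rightarrow> 'a \<Rightarrow> bool"
  assumes "simple_graph V E" and "long_graph V E"
  shows "independent_domination_number V E = domination_number V E"
proof -
  have Vd: "dominating V E V" unfolding dominating_def by auto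
  let ?g = "domination_number V E"
  have ex: "\<exists>A. dominating V E A \<and> card A = ?g"
    unfolding domination_number_def by (rule LeastI_ex) (use Vd in blast)
  have gmin: "\<And>B. dominating V E B \<Longrightarrow> ?g \<le> card B"
    unfolding domination_number_def by (rule Least_le) blast
  obtain D where D: "dominating V E D \<and> card D = ?g"
    and Dm: "\<And>B. dominating V E B \<and> card B = ?g \<Longrightarrow> card (adjd E D) \<le> card (adjd E B)"
    using ex_has_least_nat[of "\<lambda>A. dominating V E A \<and> card A = ?g", OF ex[THEN someI_ex],
        where m = "\<lambda>A. card (adjd E A)"] by blast
  have ind: "independent V E D"
    unfolding independent_def
  proof (intro conjI ballI notI)
    show "D \<subseteq> V" using D unfolding dominating_def by auto
  next
    fix x y assume xy: "x \<in> D" "y \<in> D" "E x y"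
    have DV: "D \<subseteq> V" using D unfolding dominating_def by auto
    have sym: "\<And>a b. E a b \<Longrightarrow> E b a" using assms(1) unfolding simple_graph_def by auto
    have "degree V E x \<le> 2 \<or> degree V E y \<le> 2"
      using assms(2) xy DV unfolding long_graph_def independent_def by fastforce
    moreover have mn: "\<And>B. dominating V E B \<Longrightarrow> card D \<le> card B" using D gmin by auto
    ultimately obtain D' where "dominating V E D'" "card D' = card D"
      "card (adjd E D') < card (adjd E D)"
      using swap_step[OF assms(1) conjunct1[OF D] mn xy] 
        swap_step[OF assms(1) conjunct1[OF D] mn xy(2) xy(1) sym[OF xy(3)]] by blast
    thus False using Dm[of D'] D by auto
  qed
  have "independent_domination_number V E \<le> ?g"
    unfolding independent_domination_number_def by (rule Least_le) (use D ind in blast)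
  moreover have "\<exists>B. dominating V E B \<and> independent V E B \<and> card B = independent_domination_number V E"
    unfolding independent_domination_number_def by (rule LeastI_ex) (use D ind in blast)
  hence "?g \<le> independent_domination_number V E" using gmin by metis
  ultimately show ?thesis by simp
qed

end
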